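(* Let $\sigma,\tau\in S_n$ be almost similar permutations of order $m$, and let $\mathrm{fix}(\sigma)$ denote the number of fixed points of $\sigma$. Then: (1) if $\mathrm{fix}(\sigma)=\mathrm{fix}(\tau)$, then $\sigma$ and $\tau$ are conjugate in $S_n$; (2) for every prime $p$ dividing $m$, $p$ divides $\mathrm{fix}(\sigma)-\mathrm{fix}(\tau)$.
   Context: Two permutations $\sigma,\tau\in S_n$ are called almost similar if they have the same order $m$ and for every divisor $k\neq1$ of $m$, $\sigma^k$ and $\tau^k$ are conjugate in $S_n$. *)

theory Defs
  imports "HOL-Combinatorics.Permutations" "HOL-Computational_Algebra.Primes"
begin

text \<open>S_n is modelled as the permutations of {..<n} (functions that permute {..<n}
and are the identity elsewhere).\<close>

definition perm_order :: "(nat \<Rightarrow> nat) \<Rightarrow> nat" where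
  "perm_order \<sigma> = (LEAST m. 0 < m \<and> (\<sigma> ^^ m) = id)"

definition conj_in_Sn :: "nat \<Rightarrow> (nat \<Rightarrow> nat) \<Rightarrow> (nat \<Rightarrow> nat) \<Rightarrow> bool" where
  "conj_in_Sn n \<sigma> \<tau> \<longleftrightarrow> (\<exists>\<rho>. \<rho> permutes {..<n} \<and> \<tau> = \<rho> \<circ> \<sigma> \<circ> inv \<rho>)"

definition almost_similar :: "nat \<Rightarrow> (nat \<Rightarrow> nat) \<Rightarrow> (nat \<Rightarrow> nat) \<Rightarrow> bool" where
  "almost_similar n \<sigma> \<tau> \<longleftrightarrow>
     perm_order \<sigma> = perm_order \<tau> \<and>
     (\<forall>k. k dvd perm_order \<sigma> \<and> k \<noteq> 1 \<longrightarrow> conj_in_Sn n (\<sigma> ^^ k) (\<tau> ^^ k))"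

definition num_fix :: "nat \<Rightarrow> (nat \<Rightarrow> nat) \<Rightarrow> nat" where
  "num_fix n \<sigma> = card {i. i < n \<and> \<sigma> i = i}"

end

theory Submission
  imports Defs
begin

definition per :: "('a \<Rightarrow> 'a) \<Rightarrow> 'a \<Rightarrow> nat" where
  "per f x = (LEAST k. 0 < k \<and> (f ^^ k) x = x)"

lemma funpow_mult_fix:
  assumes "(f ^^ d) x = x" shows "(f ^^ (d * q)) x = x"
proof (induction q)
  case 0 then show ?case by simp
next
  case (Suc q)
  have "(f ^^ (d * Suc q)) x = (f ^^ d) ((f ^^ (d * q)) x)"
    by (simp add: funpow_add)
  then show ?case using Suc assms by simp
qed

lemma funpow_mod_eq:
  assumes "(f ^^ d) x = x" shows "(f ^^ i) x = (f ^^ (i mod d)) x"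
proof -
  have "(f ^^ i) x = (f ^^ (i mod d + d * (i div d))) x" by simp
  also have "\<dots> = (f ^^ (i mod d)) ((f ^^ (d * (i div d))) x)"
    by (simp only: funpow_add comp_apply)
  also have "\<dots> = (f ^^ (i mod d)) x" using funpow_mult_fix[OF assms] by simp
  finally show ?thesis .
qed

lemma per_exists:
  assumes "inj f" "finite S" "\<forall>z\<in>S. f z \<in> S" "x \<in> S"
  shows "\<exists>k>0. (f ^^ k) x = x"
proof -
  have "(f ^^ n) x \<in> S" for n by (induction n) (use assms in auto)
  then have "{y. \<exists>n. y = (f ^^ n) x} \<subseteq> S" by auto
  then have "finite {y. \<exists>n. y = (f ^^ n) x}" using assms(2) finite_subset by blast
  from funpow_inj_finite[OF assms(1) this] show ?thesis by metis
qed

lemma per_props: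
  assumes "\<exists>k>0. (f ^^ k) x = x"
  shows "0 < per f x" "(f ^^ per f x) x = x" "(f ^^ k) x = x \<longleftrightarrow> per f x dvd k"
proof -
  have L: "0 < per f x \<and> (f ^^ per f x) x = x"
    unfolding per_def using assms by (metis (mono_tags, lifting) LeastI)
  then show "0 < per f x" "(f ^^ per f x) x = x" by auto
  show "(f ^^ k) x = x \<longleftrightarrow> per f x dvd k"
  proof
    assume k: "(f ^^ k) x = x"
    have m: "(f ^^ (k mod per f x)) x = x" using funpow_mod_eq[OF conjunct2[OF L], of k] k by simp
    show "per f x dvd k"
    proof (rule ccontr)
      assume "\<not> per f x dvd k"
      then have "0 < k mod per f x" by (simp add: mod_greater_zero_iff_not_dvd)
      then have "per f x \<le> k mod per f x"
        using Least_le[of "\<lambda>k. 0 < k \<and> (f ^^ k) x = x" "k mod per f x"] m unfolding per_def by blast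
      moreover have "k mod per f x < per f x" using L by simp
      ultimately show False by simp
    qed
  next
    assume "per f x dvd k"
    then obtain q where "k = per f x * q" by blast
    then show "(f ^^ k) x = x" using funpow_mult_fix[OF conjunct2[OF L]] by simp
  qed
qed

lemma funpow_eq_iff:
  assumes "inj f" "\<exists>k>0. (f ^^ k) x = x"
  shows "(f ^^ i) x = (f ^^ j) x \<longleftrightarrow> i mod per f x = j mod per f x"
proof -
  have *: "(f ^^ i) x = (f ^^ j) x \<longleftrightarrow> i mod per f x = j mod per f x" if "i \<le> j" for i j
  proof -
    have "(f ^^ j) x = (f ^^ i) ((f ^^ (j - i)) x)" using that
      by (metis le_add_diff_inverse funpow_add comp_apply)
    then have "(f ^^ i) x = (f ^^ j) x \<longleftrightarrow> (f ^^ (j - i)) x = x"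
      using inj_fn[OF assms(1), of i] by (metis injD)
    also have "\<dots> \<longleftrightarrow> per f x dvd (j - i)" using per_props(3)[OF assms(2)] by blast
    also have "\<dots> \<longleftrightarrow> j mod per f x = i mod per f x" using mod_eq_dvd_iff_nat that by metis
    finally show ?thesis by auto
  qed
  show ?thesis using *[of i j] *[of j i] by (cases "i \<le> j") auto
qed

lemma per_funpow:
  assumes "inj f" "\<exists>k>0. (f ^^ k) x = x"
  shows "per f ((f ^^ i) x) = per f x"
proof -
  have "(f ^^ k) ((f ^^ i) x) = (f ^^ i) x \<longleftrightarrow> (f ^^ k) x = x" for k
  proof -
    have "(f ^^ k) ((f ^^ i) x) = (f ^^ i) ((f ^^ k) x)"
      by (metis funpow_add add.commute comp_apply)
    then show ?thesis using inj_fn[OF assms(1), of i] by (metis injD)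
  qed
  then show ?thesis unfolding per_def by simp
qed

lemma funpow_in_inv:
  assumes "\<forall>z\<in>S. f z \<in> S" "x \<in> S" shows "(f ^^ i) x \<in> S"
  by (induction i) (use assms in auto)

lemma remove_orbit:
  assumes inj: "inj f" and fin: "finite S" and inv: "\<forall>z\<in>S. f z \<in> S" and xS: "x \<in> S"
  defines "d \<equiv> per f x" and "Oa \<equiv> (\<lambda>i. (f ^^ i) x) ` {..<per f x}"
  shows "0 < d" "x \<in> Oa" "Oa \<subseteq> S" "card Oa = d" "\<forall>z\<in>Oa. per f z = d"
    "\<forall>z\<in>S - Oa. f z \<in> S - Oa" "\<forall>i. (f ^^ i) x \<in> Oa"
    "\<forall>e. card {z\<in>S - Oa. per f z = e} = card {z\<in>S. per f z = e} - (if e = d then d else 0)"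
    "d \<le> card {z\<in>S. per f z = d}"
proof -
  have ex: "\<exists>k>0. (f ^^ k) x = x" using per_exists[OF inj fin inv xS] .
  note pp = per_props[OF ex, folded d_def]
  have Oa_def: "Oa = (\<lambda>i. (f ^^ i) x) ` {..<d}" unfolding Oa_def d_def ..
  show d0: "0 < d" using pp(1) .
  show allO: "\<forall>i. (f ^^ i) x \<in> Oa"
  proof
    fix i
    have "(f ^^ i) x = (f ^^ (i mod d)) x" using funpow_mod_eq[OF pp(2)] .
    moreover have "i mod d < d" using d0 by simp
    ultimately show "(f ^^ i) x \<in> Oa" unfolding Oa_def by blast
  qed
  show "x \<in> Oa" using allO[rule_format, of 0] by simp
  show OS: "Oa \<subseteq> S" unfolding Oa_def using funpow_in_inv[OF inv xS] by blast
  have "inj_on (\<lambda>i. (f ^^ i) x) {..<d}"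
    using funpow_eq_iff[OF inj ex, folded d_def] by (auto simp: inj_on_def)
  then show cO: "card Oa = d" unfolding Oa_def by (simp add: card_image)
  show perO: "\<forall>z\<in>Oa. per f z = d" unfolding Oa_def d_def using per_funpow[OF inj ex] by blast
  show "\<forall>z\<in>S - Oa. f z \<in> S - Oa"
  proof
    fix z assume z: "z \<in> S - Oa"
    have "f z \<notin> Oa"
    proof
      assume "f z \<in> Oa"
      then obtain i where i: "f z = (f ^^ i) x" unfolding Oa_def by blast
      have "(f ^^ i) x = (f ^^ (i + d)) x"
        using funpow_eq_iff[OF inj ex, folded d_def] by simp
      also have "\<dots> = f ((f ^^ (i + d - 1)) x)" using d0
        by (metis Suc_diff_1 add_gr_0 funpow.simps(2) comp_apply)
      finally have "z = (f ^^ (i + d - 1)) x" using i inj by (metis injD)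
      then show False using z allO by blast
    qed
    then show "f z \<in> S - Oa" using z inv by blast
  qed
  show "\<forall>e. card {z\<in>S - Oa. per f z = e} = card {z\<in>S. per f z = e} - (if e = d then d else 0)"
  proof
    fix e
    show "card {z\<in>S - Oa. per f z = e} = card {z\<in>S. per f z = e} - (if e = d then d else 0)"
    proof (cases "e = d")
      case True
      have "{z\<in>S - Oa. per f z = e} = {z\<in>S. per f z = e} - Oa" by auto
      moreover have "Oa \<subseteq> {z\<in>S. per f z = e}" using OS perO True by auto
      ultimately show ?thesis using True cO fin by (simp add: card_Diff_subset finite_subset)
    next
      case False
      then have "{z\<in>S - Oa. per f z = e} = {z\<in>S. per f z = e}" using perO by auto
      then show ?thesis using False by simp
    qed
  qed
  have "Oa \<subseteq> {z\<in>S. per f z = d}" using OS perO by auto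
  then show "d \<le> card {z\<in>S. per f z = d}" using cO fin
    by (metis (no_types, lifting) card_mono finite_subset mem_Collect_eq subsetI)
qed

lemma conj_aux:
  "\<lbrakk>finite S; finite T; inj f; inj g; \<forall>z\<in>S. f z \<in> S; \<forall>z\<in>T. g z \<in> T;
    \<forall>e. card {z\<in>S. per f z = e} = card {z\<in>T. per g z = e}\<rbrakk>
   \<Longrightarrow> \<exists>\<rho>. bij_betw \<rho> S T \<and> (\<forall>z\<in>S. \<rho> (f z) = g (\<rho> z))"
proof (induction "card S" arbitrary: S T rule: less_induct)
  case less
  show ?case
  proof (cases "S = {}")
    case True
    have "T = {}"
    proof (rule ccontr)
      assume "T \<noteq> {}"
      then obtain y where y: "y \<in> T" by blast
      have "card {z\<in>T. per g z = per g y} > 0" using y less.prems(2)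
        by (subst card_gt_0_iff) auto
      moreover have "card {z\<in>S. per f z = per g y} = 0" using True by simp
      ultimately show False using less.prems(7) by simp
    qed
    then show ?thesis using True by (auto simp: bij_betw_def)
  next
    case False
    then obtain x where xS: "x \<in> S" by blast
    define d where "d = per f x"
    define Oa where "Oa = (\<lambda>i. (f ^^ i) x) ` {..<d}"
    note RS = remove_orbit[OF less.prems(3,1,5) xS, folded d_def, folded Oa_def]
    have "d \<le> card {z\<in>T. per g z = d}" using RS(9) less.prems(7) by simp
    then have "{z\<in>T. per g z = d} \<noteq> {}" using RS(1) by (metis card.empty not_le)
    then obtain y where yT: "y \<in> T" and yd: "per g y = d" by blast
    define Ob where "Ob = (\<lambda>i. (g ^^ i) y) ` {..<d}"
    note RT = remove_orbit[OF less.prems(4,2,6) yT, unfolded yd, folded Ob_def]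
    have exx: "\<exists>k>0. (f ^^ k) x = x" using per_exists[OF less.prems(3,1,5) xS] .
    have exy: "\<exists>k>0. (g ^^ k) y = y" using per_exists[OF less.prems(4,2,6) yT] .
    have "card (S - Oa) < card S" using RS(2,3) less.prems(1)
      by (intro psubset_card_mono) auto
    moreover have "\<forall>e. card {z\<in>S - Oa. per f z = e} = card {z\<in>T - Ob. per g z = e}"
      using RS(8) RT(8) less.prems(7) by simp
    ultimately obtain \<rho>' where r1: "bij_betw \<rho>' (S - Oa) (T - Ob)"
      and r2: "\<forall>z\<in>S - Oa. \<rho>' (f z) = g (\<rho>' z)"
      using less.hyps[of "S - Oa" "T - Ob"] less.prems RS(6) RT(6) by blast
    define \<rho> where "\<rho> z = (if z \<in> Oa then (g ^^ (SOME i. (f ^^ i) x = z)) y else \<rho>' z)" for z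
    have key: "\<rho> ((f ^^ i) x) = (g ^^ i) y" for i
    proof -
      have "(f ^^ (SOME j. (f ^^ j) x = (f ^^ i) x)) x = (f ^^ i) x"
        by (rule someI[of _ i]) simp
      then have "(SOME j. (f ^^ j) x = (f ^^ i) x) mod d = i mod d"
        using funpow_eq_iff[OF less.prems(3) exx, folded d_def] by blast
      then have "(g ^^ (SOME j. (f ^^ j) x = (f ^^ i) x)) y = (g ^^ i) y"
        using funpow_eq_iff[OF less.prems(4) exy, unfolded yd] by blast
      then show ?thesis unfolding \<rho>_def using RS(7) by simp
    qed
    have imO: "\<rho> ` Oa = Ob" unfolding Oa_def Ob_def using key by (auto simp: image_image)
    have bO: "bij_betw \<rho> Oa Ob"
      unfolding bij_betw_def using imO RS(4) RT(4) 
      by (metis eq_card_imp_inj_on card.infinite RS(1) less_irrefl)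
    have bR: "bij_betw \<rho> (S - Oa) (T - Ob)"
      using r1 by (rule bij_betw_cong[THEN iffD1, rotated]) (simp add: \<rho>_def)
    have "bij_betw \<rho> (Oa \<union> (S - Oa)) (Ob \<union> (T - Ob))"
      by (rule bij_betw_combine[OF bO bR]) auto
    moreover have "Oa \<union> (S - Oa) = S" "Ob \<union> (T - Ob) = T" using RS(3) RT(3) by auto
    ultimately have bij: "bij_betw \<rho> S T" by simp
    have comm: "\<rho> (f z) = g (\<rho> z)" if z: "z \<in> S" for z
    proof (cases "z \<in> Oa")
      case True
      then obtain i where i: "z = (f ^^ i) x" unfolding Oa_def by blast
      have "\<rho> (f z) = \<rho> ((f ^^ Suc i) x)" using i by simp
      also have "\<dots> = (g ^^ Suc i) y" by (rule key)
      also have "\<dots> = g (\<rho> z)" using key i by simp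
      finally show ?thesis .
    next
      case False
      then have "z \<in> S - Oa" "f z \<in> S - Oa" using z RS(6) by auto
      then show ?thesis using r2 by (simp add: \<rho>_def)
    qed
    show ?thesis using bij comm by blast
  qed
qed

lemma dvd_card_per:
  "\<lbrakk>finite S; inj f; \<forall>z\<in>S. f z \<in> S; 0 < d\<rbrakk> \<Longrightarrow> d dvd card {z\<in>S. per f z = d}"
proof (induction "card S" arbitrary: S rule: less_induct)
  case less
  show ?case
  proof (cases "{z\<in>S. per f z = d} = {}")
    case True then show ?thesis by (metis card.empty dvd_0_right)
  next
    case False
    then obtain x where xS: "x \<in> S" and xd: "per f x = d" by blast
    define Oa where "Oa = (\<lambda>i. (f ^^ i) x) ` {..<per f x}"
    note RS = remove_orbit[OF less.prems(2,1,3) xS, unfolded xd, folded Oa_def[unfolded xd]]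
    have "card (S - Oa) < card S" using RS(2,3) less.prems(1)
      by (intro psubset_card_mono) auto
    then have "d dvd card {z\<in>S - Oa. per f z = d}"
      using less.hyps[of "S - Oa"] less.prems RS(6) by blast
    then have "d dvd card {z\<in>S. per f z = d} - d" using RS(8) by simp
    then show ?thesis using RS(9) by (metis dvd_diff_nat dvd_refl le_add_diff_inverse2 dvd_add)
  qed
qed

lemma perm_ex:
  fixes n :: nat
  assumes "\<sigma> permutes {..<n}" shows "\<exists>k>0. (\<sigma> ^^ k) x = x"
proof (cases "x < n")
  case True
  have "\<forall>z\<in>{..<n}. \<sigma> z \<in> {..<n}" using permutes_in_image[OF assms] by blast
  then show ?thesis
    by (intro per_exists[of _ "{..<n}"]) (use True permutes_inj[OF assms] in \<open>auto simp: finite_lessThan\<close>)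
next
  case False
  then have "\<sigma> x = x" using permutes_not_in[OF assms] by simp
  then show ?thesis by (intro exI[of _ 1]) simp
qed

lemma perm_order_props:
  assumes "\<sigma> permutes {..<n}"
  shows "0 < perm_order \<sigma>" "\<sigma> ^^ perm_order \<sigma> = id"
proof -
  define K where "K = (\<Prod>x\<in>{..<n}. per \<sigma> x)"
  have Kpos: "0 < K" unfolding K_def using per_props(1)[OF perm_ex[OF assms]]
    by (simp add: prod_pos)
  have "(\<sigma> ^^ K) x = x" for x
  proof (cases "x < n")
    case True
    then have "per \<sigma> x dvd K" unfolding K_def by auto
    then show ?thesis using per_props(3)[OF perm_ex[OF assms]] by blast
  next
    case False
    then have "\<sigma> x = x" using permutes_not_in[OF assms] by simp
    then have "per \<sigma> x dvd 1" using per_props(3)[OF perm_ex[OF assms], where k=1] by simp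
    then have "per \<sigma> x dvd K" by auto
    then show ?thesis using per_props(3)[OF perm_ex[OF assms]] by blast
  qed
  then have "0 < K \<and> \<sigma> ^^ K = id" using Kpos by auto
  then have "0 < perm_order \<sigma> \<and> \<sigma> ^^ perm_order \<sigma> = id"
    unfolding perm_order_def by (rule LeastI)
  then show "0 < perm_order \<sigma>" "\<sigma> ^^ perm_order \<sigma> = id" by auto
qed

lemma fix_gcd:
  assumes "\<sigma> permutes {..<n}"
  shows "(\<sigma> ^^ k) x = x \<longleftrightarrow> (\<sigma> ^^ gcd k (perm_order \<sigma>)) x = x"
proof -
  note P = per_props(3)[OF perm_ex[OF assms]]
  have "per \<sigma> x dvd perm_order \<sigma>" using P perm_order_props(2)[OF assms] by (metis id_apply)
  then show ?thesis using P by (metis gcd_dvd1 gcd_dvd2 dvd_trans gcd_greatest)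
qed

lemma conj_card:
  assumes "conj_in_Sn n \<alpha> \<beta>"
  shows "card {x. x < n \<and> \<alpha> x = x} = card {x. x < n \<and> \<beta> x = x}"
proof -
  obtain \<rho> where r: "\<rho> permutes {..<n}" and b: "\<beta> = \<rho> \<circ> \<alpha> \<circ> inv \<rho>"
    using assms unfolding conj_in_Sn_def by blast
  have inj: "inj \<rho>" using permutes_inj[OF r] .
  have "{x. x < n \<and> \<beta> x = x} = \<rho> ` {x. x < n \<and> \<alpha> x = x}"
  proof (intro set_eqI iffI)
    fix x assume x: "x \<in> {x. x < n \<and> \<beta> x = x}"
    define w where "w = inv \<rho> x"
    have xw: "x = \<rho> w" unfolding w_def using permutes_inverses(1)[OF r] by simp
    have "w < n" using x xw permutes_in_image[OF r, of w] by simp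
    moreover
    have "\<rho> (\<alpha> w) = \<rho> w"
    proof -
      have "\<rho> (\<alpha> w) = \<beta> x" using b unfolding w_def by simp
      also have "\<dots> = x" using x by simp
      also have "\<dots> = \<rho> w" by (rule xw)
      finally show ?thesis .
    qed
    then have "\<alpha> w = w" using inj by (meson injD)
    ultimately show "x \<in> \<rho> ` {x. x < n \<and> \<alpha> x = x}" using xw by blast
  next
    fix x assume "x \<in> \<rho> ` {x. x < n \<and> \<alpha> x = x}"
    then obtain w where w: "w < n" "\<alpha> w = w" "x = \<rho> w" by blast
    have "inv \<rho> x = w" using w(3) permutes_inverses(2)[OF r] by simp
    then show "x \<in> {x. x < n \<and> \<beta> x = x}" using w b permutes_in_image[OF r, of w] by simp
  qed
  then show ?thesis using inj by (simp add: card_image inj_on_subset)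
qed

definition Fc :: "nat \<Rightarrow> (nat \<Rightarrow> nat) \<Rightarrow> nat \<Rightarrow> nat" where
  "Fc n \<sigma> k = card {x. x < n \<and> (\<sigma> ^^ k) x = x}"

definition Pc :: "nat \<Rightarrow> (nat \<Rightarrow> nat) \<Rightarrow> nat \<Rightarrow> nat" where
  "Pc n \<sigma> d = card {x. x < n \<and> per \<sigma> x = d}"

lemma F_eq:
  assumes s: "\<sigma> permutes {..<n}" and t: "\<tau> permutes {..<n}" and as: "almost_similar n \<sigma> \<tau>"
    and k: "0 < k" and c: "gcd k (perm_order \<sigma>) \<noteq> 1 \<or> num_fix n \<sigma> = num_fix n \<tau>"
  shows "Fc n \<sigma> k = Fc n \<tau> k"
proof -
  define g where "g = gcd k (perm_order \<sigma>)"
  have m: "perm_order \<tau> = perm_order \<sigma>" using as unfolding almost_similar_def by simp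
  have "Fc n \<sigma> k = Fc n \<sigma> g" unfolding Fc_def g_def using fix_gcd[OF s] by simp
  moreover have "Fc n \<tau> k = Fc n \<tau> g" unfolding Fc_def g_def using fix_gcd[OF t] m by simp
  moreover have "Fc n \<sigma> g = Fc n \<tau> g"
  proof (cases "g = 1")
    case True
    then show ?thesis using c g_def unfolding Fc_def num_fix_def by simp
  next
    case False
    have "g dvd perm_order \<sigma>" unfolding g_def by simp
    then have "conj_in_Sn n (\<sigma> ^^ g) (\<tau> ^^ g)" using as False unfolding almost_similar_def by blast
    then show ?thesis unfolding Fc_def by (rule conj_card)
  qed
  ultimately show ?thesis by simp
qed

lemma F_sum:
  assumes s: "\<sigma> permutes {..<n}" and d: "0 < d"
  shows "Fc n \<sigma> d = (\<Sum>e\<in>{e. e dvd d}. Pc n \<sigma> e)"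
proof -
  have "{x. x < n \<and> (\<sigma> ^^ d) x = x} = (\<Union>e\<in>{e. e dvd d}. {x. x < n \<and> per \<sigma> x = e})"
    using per_props(3)[OF perm_ex[OF s]] by auto
  moreover have "card (\<Union>e\<in>{e. e dvd d}. {x. x < n \<and> per \<sigma> x = e})
     = (\<Sum>e\<in>{e. e dvd d}. card {x. x < n \<and> per \<sigma> x = e})"
    by (rule card_UN_disjoint) (use d in auto)
  ultimately show ?thesis unfolding Fc_def Pc_def by simp
qed

lemma P_eq:
  assumes s: "\<sigma> permutes {..<n}" and t: "\<tau> permutes {..<n}"
    and F: "\<forall>k>0. Fc n \<sigma> k = Fc n \<tau> k"
  shows "Pc n \<sigma> d = Pc n \<tau> d"
proof (induction d rule: less_induct)
  case (less d)
  show ?case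
  proof (cases "d = 0")
    case True
    have A: "{x. x < n \<and> per \<sigma> x = d} = {}" using True per_props(1)[OF perm_ex[OF s]] by auto
    have B: "{x. x < n \<and> per \<tau> x = d} = {}" using True per_props(1)[OF perm_ex[OF t]] by auto
    show ?thesis unfolding Pc_def by (subst A, subst B) simp
  next
    case False
    then have d: "0 < d" by simp
    have fin: "finite {e. e dvd d}" using d by simp
    have eq: "{e. e dvd d} = insert d {e. e dvd d \<and> e < d}" using d
      by (auto dest: dvd_imp_le)
    have fin2: "finite {e. e dvd d \<and> e < d}" by simp
    have "Fc n \<sigma> d = Pc n \<sigma> d + (\<Sum>e\<in>{e. e dvd d \<and> e < d}. Pc n \<sigma> e)"
      using F_sum[OF s d] eq fin2 by simp
    moreover have "Fc n \<tau> d = Pc n \<tau> d + (\<Sum>e\<in>{e. e dvd d \<and> e < d}. Pc n \<tau> e)"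
      using F_sum[OF t d] eq fin2 by simp
    moreover have "(\<Sum>e\<in>{e. e dvd d \<and> e < d}. Pc n \<sigma> e) = (\<Sum>e\<in>{e. e dvd d \<and> e < d}. Pc n \<tau> e)"
      using less.IH by (intro sum.cong) auto
    ultimately show ?thesis using F d by simp
  qed
qed

lemma conj_from_bij:
  assumes s: "\<sigma> permutes {..<n}" and t: "\<tau> permutes {..<n}"
    and b: "bij_betw \<rho> {..<n} {..<n}" and c: "\<forall>z\<in>{..<n}. \<rho> (\<sigma> z) = \<tau> (\<rho> z)"
  shows "conj_in_Sn n \<sigma> \<tau>"
proof -
  define r where "r z = (if z < n then \<rho> z else z)" for z
  have "bij_betw r {..<n} {..<n}" using b by (rule bij_betw_cong[THEN iffD1, rotated]) (simp add: r_def)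
  then have rp: "r permutes {..<n}" by (rule bij_imp_permutes) (simp add: r_def)
  have comm: "\<tau> \<circ> r = r \<circ> \<sigma>"
  proof
    fix z show "(\<tau> \<circ> r) z = (r \<circ> \<sigma>) z"
    proof (cases "z < n")
      case True
      then have "\<sigma> z < n" using permutes_in_image[OF s, of z] by simp
      then show ?thesis using True c by (simp add: r_def)
    next
      case False
      then show ?thesis using permutes_not_in[OF s, of z] permutes_not_in[OF t, of z] by (simp add: r_def)
    qed
  qed
  have "\<tau> = \<tau> \<circ> (r \<circ> inv r)" using permutes_inv_o(1)[OF rp] by simp
  also have "\<dots> = r \<circ> \<sigma> \<circ> inv r" using comm by (metis comp_assoc)
  finally show ?thesis unfolding conj_in_Sn_def using rp by blast
qed

theorem lemma3p7:
  fixes n :: nat and \<sigma> \<tau> :: "nat \<Rightarrow> nat"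
  assumes "\<sigma> permutes {..<n}" and "\<tau> permutes {..<n}"
    and "almost_similar n \<sigma> \<tau>"
  shows "(num_fix n \<sigma> = num_fix n \<tau> \<longrightarrow> conj_in_Sn n \<sigma> \<tau>) \<and>
         (\<forall>p::nat. prime p \<and> p dvd perm_order \<sigma> \<longrightarrow>
             int p dvd int (num_fix n \<sigma>) - int (num_fix n \<tau>))"
proof -
  note s = assms(1) and t = assms(2) and as = assms(3)
  have invs: "\<forall>z\<in>{..<n}. \<sigma> z \<in> {..<n}" using permutes_in_image[OF s] by blast
  have invt: "\<forall>z\<in>{..<n}. \<tau> z \<in> {..<n}" using permutes_in_image[OF t] by blast
  have part1: "num_fix n \<sigma> = num_fix n \<tau> \<longrightarrow> conj_in_Sn n \<sigma> \<tau>"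
  proof
    assume nf: "num_fix n \<sigma> = num_fix n \<tau>"
    have F: "\<forall>k>0. Fc n \<sigma> k = Fc n \<tau> k" using F_eq[OF s t as] nf by blast
    have P: "\<forall>e. card {z\<in>{..<n}. per \<sigma> z = e} = card {z\<in>{..<n}. per \<tau> z = e}"
      using P_eq[OF s t F] unfolding Pc_def by simp
    obtain \<rho> where "bij_betw \<rho> {..<n} {..<n}" "\<forall>z\<in>{..<n}. \<rho> (\<sigma> z) = \<tau> (\<rho> z)"
      using conj_aux[OF finite_lessThan finite_lessThan permutes_inj[OF s] permutes_inj[OF t] invs invt P]
      by blast
    then show "conj_in_Sn n \<sigma> \<tau>" using conj_from_bij[OF s t] by blast
  qed
  have part2: "\<forall>p::nat. prime p \<and> p dvd perm_order \<sigma> \<longrightarrow>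
             int p dvd int (num_fix n \<sigma>) - int (num_fix n \<tau>)"
  proof (intro allI impI)
    fix p :: nat assume p: "prime p \<and> p dvd perm_order \<sigma>"
    have p1: "1 < p" using p prime_gt_1_nat by blast
    then have p0: "0 < p" by simp
    have g: "gcd p (perm_order \<sigma>) = p" using p by (simp add: gcd_nat.absorb1)
    have Fp: "Fc n \<sigma> p = Fc n \<tau> p" using F_eq[OF s t as p0] g p1 by simp
    have div: "{e. e dvd p} = {1, p}" using p unfolding prime_nat_iff by auto
    have Fs: "Fc n \<sigma> p = Pc n \<sigma> 1 + Pc n \<sigma> p" using F_sum[OF s p0] div p1 by simp
    have Ft: "Fc n \<tau> p = Pc n \<tau> 1 + Pc n \<tau> p" using F_sum[OF t p0] div p1 by simp
    have P1: "Pc n f 1 = num_fix n f" if f: "f permutes {..<n}" for f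
    proof -
      have "per f x = 1 \<longleftrightarrow> f x = x" for x
        using per_props(3)[OF perm_ex[OF f], where k=1] by simp
      then show ?thesis unfolding Pc_def num_fix_def by simp
    qed
    have dv: "p dvd Pc n f p" if f: "f permutes {..<n}" for f
    proof -
      have "\<forall>z\<in>{..<n}. f z \<in> {..<n}" using permutes_in_image[OF f] by blast
      from dvd_card_per[OF finite_lessThan permutes_inj[OF f] this p0]
      show ?thesis unfolding Pc_def by simp
    qed
    have e: "int (num_fix n \<sigma>) - int (num_fix n \<tau>) = int (Pc n \<tau> p) - int (Pc n \<sigma> p)"
      using Fp Fs Ft P1[OF s] P1[OF t] by simp
    show "int p dvd int (num_fix n \<sigma>) - int (num_fix n \<tau>)"
      unfolding e using dv[OF s] dv[OF t] by (simp add: dvd_diff int_dvd_int_iff)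
  qed
  show ?thesis using part1 part2 by blast
qed

end
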